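(* Let $\mathcal X\subset\mathbb{R}$ be nonempty, compact and convex with $\mathcal X\subseteq[0,\infty)$, let $X^a,X^b\in\mathbb{R}^{3\times n}$, $t^a,t^b\in\mathbb{R}^3$, $\epsilon_r>0$, and define the cable-driven control term $b(\theta,u)=u\sqrt{\|(X^a\theta+t^a)-(X^b\theta+t^b)\|^2+\epsilon_r}$ for $\theta\in\mathbb{R}^n$, $u\in\mathcal X$. Then for every $u\in\mathcal X$, $b(\cdot,u)$ is twice differentiable with locally Lipschitz second derivatives and is $L$-curvature bounded for a constant $L$ independent of $u\in\mathcal X$, and $\|\partial^2b/\partial\theta\partial u\|$ is uniformly bounded over $\theta\in\mathbb{R}^n$, $u\in\mathcal X$.
   Context: A function $\phi$ is $L$-curvature bounded if $\phi(x)+\frac L2\|x\|^2$ is convex and $\nabla\phi$ is $L$-Lipschitz. *)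

theory Defs
  imports "HOL-Analysis.Analysis"
begin

definition cable_b ::
  "real^'n^3 \<Rightarrow> real^3 \<Rightarrow> real^'n^3 \<Rightarrow> real^3 \<Rightarrow> real \<Rightarrow> real^'n \<Rightarrow> real \<Rightarrow> real" where
  "cable_b Xa ta Xb tb er \<theta> u =
     u * sqrt ((norm ((Xa *v \<theta> + ta) - (Xb *v \<theta> + tb)))\<^sup>2 + er)"

definition twice_diff_loclip_hessian :: "('a::euclidean_space \<Rightarrow> real) \<Rightarrow> bool" where
  "twice_diff_loclip_hessian \<phi> \<longleftrightarrow>
     (\<exists>g H. (\<forall>x. (\<phi> has_derivative (\<lambda>h. g x \<bullet> h)) (at x)) \<and>
            (\<forall>x. (g has_derivative blinfun_apply (H x)) (at x)) \<and>
            (\<forall>x. \<exists>e>0. \<exists>K. lipschitz_on K (ball x e) H))"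

definition curvature_bounded :: "real \<Rightarrow> ('a::euclidean_space \<Rightarrow> real) \<Rightarrow> bool" where
  "curvature_bounded L \<phi> \<longleftrightarrow>
     convex_on UNIV (\<lambda>x. \<phi> x + L / 2 * (norm x)\<^sup>2) \<and>
     (\<exists>g. (\<forall>x. (\<phi> has_derivative (\<lambda>h. g x \<bullet> h)) (at x)) \<and> lipschitz_on L UNIV g)"

end

theory Submission
  imports Defs
begin

definition cw :: "real \<Rightarrow> 'a::real_inner \<Rightarrow> real" where
  "cw e x = sqrt ((norm x)\<^sup>2 + e)"
definition cv :: "real \<Rightarrow> 'a::real_inner \<Rightarrow> 'a" where
  "cv e x = x /\<^sub>R cw e x"

lemma cw_ge: "e > 0 \<Longrightarrow> sqrt e \<le> cw e x"
  unfolding cw_def by (auto intro: real_sqrt_le_mono)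
lemma cw_pos: "e > 0 \<Longrightarrow> 0 < cw e x"
  unfolding cw_def by (auto intro!: add_nonneg_pos)
lemma cw_norm: "e > 0 \<Longrightarrow> norm x \<le> cw e x"
  unfolding cw_def by (rule real_le_rsqrt) auto
lemma cw_sq: "e > 0 \<Longrightarrow> (cw e x)\<^sup>2 = (norm x)\<^sup>2 + e"
  unfolding cw_def by (simp add: add_nonneg_nonneg)

lemma cw_lip: assumes "e > 0" shows "\<bar>cw e x - cw e y\<bar> \<le> norm (x - y)"
proof -
  have p: "0 < cw e x + cw e y" using cw_pos[OF assms, of x] cw_pos[OF assms, of y] by simp
  have "(cw e x - cw e y) * (cw e x + cw e y) = (norm x - norm y) * (norm x + norm y)"
    using cw_sq[OF assms, of x] cw_sq[OF assms, of y] by (simp add: algebra_simps power2_eq_square)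
  hence "\<bar>cw e x - cw e y\<bar> * (cw e x + cw e y) = \<bar>norm x - norm y\<bar> * (norm x + norm y)"
    by (metis abs_mult abs_of_nonneg abs_of_pos norm_ge_zero p add_nonneg_nonneg)
  also have "\<dots> \<le> norm (x - y) * (cw e x + cw e y)"
    using cw_norm[OF assms, of x] cw_norm[OF assms, of y] norm_triangle_ineq3[of x y]
    by (intro mult_mono) auto
  finally show ?thesis using p by simp
qed

lemma inv_cw_lip: assumes "e > 0" shows "\<bar>1 / cw e x - 1 / cw e y\<bar> \<le> norm (x - y) / e"
proof -
  have px: "0 < cw e x" and py: "0 < cw e y" using cw_pos[OF assms] by auto
  have "\<bar>1 / cw e x - 1 / cw e y\<bar> = \<bar>cw e x - cw e y\<bar> / (cw e x * cw e y)"
    using px py by (simp add: field_simps abs_div abs_mult abs_minus_commute)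
  also have "\<dots> \<le> norm (x - y) / (cw e x * cw e y)"
    using cw_lip[OF assms, of x y] px py by (intro divide_right_mono) auto
  also have "\<dots> \<le> norm (x - y) / e"
  proof -
    have "sqrt e * sqrt e \<le> cw e x * cw e y"
      using cw_ge[OF assms, of x] cw_ge[OF assms, of y] cw_pos[OF assms, of x] assms by (intro mult_mono) auto
    hence "e \<le> cw e x * cw e y" using assms by simp
    thus ?thesis using assms by (intro divide_left_mono) auto
  qed
  finally show ?thesis .
qed

lemma cv_norm: "e > 0 \<Longrightarrow> norm (cv e x) \<le> 1"
  unfolding cv_def using cw_norm[of e x] cw_pos[of e x] by (simp add: field_simps)

lemma cv_lip: assumes "e > 0" shows "norm (cv e x - cv e y) \<le> 2 / sqrt e * norm (x - y)"
proof -
  have px: "0 < cw e x" and py: "0 < cw e y" using cw_pos[OF assms] by auto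
  have "cv e x - cv e y = (x - y) /\<^sub>R cw e x + ((1 / cw e x - 1 / cw e y) *\<^sub>R y)"
    unfolding cv_def by (simp add: algebra_simps divide_inverse)
  hence "norm (cv e x - cv e y) \<le> norm ((x - y) /\<^sub>R cw e x) + norm ((1 / cw e x - 1 / cw e y) *\<^sub>R y)"
    by (simp only: norm_triangle_ineq)
  also have "\<dots> = norm (x - y) / cw e x + \<bar>1 / cw e x - 1 / cw e y\<bar> * norm y"
    using px by (simp add: divide_inverse mult.commute)
  also have "\<bar>1 / cw e x - 1 / cw e y\<bar> * norm y = \<bar>cw e y - cw e x\<bar> / cw e x * (norm y / cw e y)"
    using px py by (simp add: field_simps abs_div abs_mult)
  also have "\<dots> \<le> norm (x - y) / cw e x * 1"
    using cw_lip[OF assms, of y x] cw_norm[OF assms, of y] px py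
    by (intro mult_mono divide_right_mono) (auto simp: norm_minus_commute)
  also have "norm (x - y) / cw e x \<le> norm (x - y) / sqrt e"
    using cw_ge[OF assms, of x] cw_pos[OF assms, of x] assms by (intro divide_left_mono) auto
  finally show ?thesis by simp
qed

lemma tele:
  fixes a b A B P d :: real and p q h :: "'a::real_inner"
  assumes ab: "\<bar>a - b\<bar> \<le> A * d" and bB: "\<bar>b\<bar> \<le> B" and p1: "norm p \<le> 1" and q1: "norm q \<le> 1"
    and pq: "norm (p - q) \<le> P * d" and "0 \<le> A" "0 \<le> B" "0 \<le> P" "0 \<le> d"
  shows "norm ((a - b) *\<^sub>R h - ((a * (p \<bullet> h)) *\<^sub>R p - (b * (q \<bullet> h)) *\<^sub>R q)) \<le> (2*A + 2*B*P) * d * norm h"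
proof -
  have eq: "(a - b) *\<^sub>R h - ((a * (p \<bullet> h)) *\<^sub>R p - (b * (q \<bullet> h)) *\<^sub>R q)
    = (a - b) *\<^sub>R h - ((a - b) * (p \<bullet> h)) *\<^sub>R p - (b * ((p - q) \<bullet> h)) *\<^sub>R p - (b * (q \<bullet> h)) *\<^sub>R (p - q)"
    by (simp add: algebra_simps inner_diff_left)
  have n0: "norm h \<ge> 0" by simp
  have t1: "norm ((a - b) *\<^sub>R h) \<le> A * d * norm h" using ab n0 by (simp add: mult_right_mono)
  have "\<bar>p \<bullet> h\<bar> \<le> norm h" using Cauchy_Schwarz_ineq2[of p h] p1 n0
    by (meson dual_order.trans mult_left_le_one_le norm_ge_zero mult.commute)
  hence t2: "norm (((a - b) * (p \<bullet> h)) *\<^sub>R p) \<le> A * d * norm h"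
  proof -
    have "\<bar>a - b\<bar> * \<bar>p \<bullet> h\<bar> * norm p \<le> (A * d) * norm h * 1"
      using ab p1 \<open>\<bar>p \<bullet> h\<bar> \<le> norm h\<close> by (intro mult_mono) auto
    thus ?thesis by (simp add: abs_mult)
  qed
  have "\<bar>(p - q) \<bullet> h\<bar> \<le> P * d * norm h" using Cauchy_Schwarz_ineq2[of "p-q" h] pq n0
    by (meson dual_order.trans mult_right_mono)
  hence t3: "norm ((b * ((p - q) \<bullet> h)) *\<^sub>R p) \<le> B * (P * d * norm h)"
  proof -
    have "\<bar>b\<bar> * \<bar>(p - q) \<bullet> h\<bar> * norm p \<le> B * (P * d * norm h) * 1"
      using bB p1 \<open>\<bar>(p - q) \<bullet> h\<bar> \<le> P * d * norm h\<close> \<open>0 \<le> B\<close> by (intro mult_mono) auto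
    thus ?thesis by (simp add: abs_mult)
  qed
  have "\<bar>q \<bullet> h\<bar> \<le> norm h" using Cauchy_Schwarz_ineq2[of q h] q1 n0
    by (meson dual_order.trans mult_left_le_one_le norm_ge_zero mult.commute)
  hence t4: "norm ((b * (q \<bullet> h)) *\<^sub>R (p - q)) \<le> B * (P * d * norm h)"
  proof -
    have "\<bar>b\<bar> * \<bar>q \<bullet> h\<bar> * norm (p - q) \<le> B * norm h * (P * d)"
      using bB pq \<open>\<bar>q \<bullet> h\<bar> \<le> norm h\<close> \<open>0 \<le> B\<close> by (intro mult_mono) auto
    thus ?thesis by (simp only: norm_scaleR abs_mult mult_ac)
  qed
  have "norm ((a - b) *\<^sub>R h - ((a * (p \<bullet> h)) *\<^sub>R p - (b * (q \<bullet> h)) *\<^sub>R q))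
      \<le> norm ((a - b) *\<^sub>R h) + norm (((a - b) * (p \<bullet> h)) *\<^sub>R p) + norm ((b * ((p - q) \<bullet> h)) *\<^sub>R p) + norm ((b * (q \<bullet> h)) *\<^sub>R (p - q))"
    unfolding eq by (smt (verit) norm_triangle_ineq4)
  also have "\<dots> \<le> (2*A + 2*B*P) * d * norm h" using t1 t2 t3 t4 by (simp add: algebra_simps)
  finally show ?thesis .
qed


lemma cw_deriv: assumes "e > 0" shows "(cw e has_derivative (\<lambda>h. cv e x \<bullet> h)) (at x)"
proof -
  have eq: "cw e = (\<lambda>x. sqrt (x \<bullet> x + e))" by (auto simp: cw_def power2_norm_eq_inner)
  have pos: "0 < x \<bullet> x + e" using assms by (simp add: add_nonneg_pos)
  show ?thesis unfolding eq
    apply (rule has_derivative_eq_rhs)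
     apply (rule derivative_eq_intros | use pos in simp)+
    apply (rule ext)
    using pos by (simp add: cv_def cw_def power2_norm_eq_inner inner_commute field_simps)
qed

definition hf :: "real \<Rightarrow> 'a::real_inner \<Rightarrow> 'a \<Rightarrow>\<^sub>L 'a" where
  "hf e x = Blinfun (\<lambda>h. h /\<^sub>R cw e x - ((cv e x \<bullet> h) / cw e x) *\<^sub>R cv e x)"

lemma hf_apply: "blinfun_apply (hf e x) h = h /\<^sub>R cw e x - ((cv e x \<bullet> h) / cw e x) *\<^sub>R cv e x"
proof -
  have "bounded_linear (\<lambda>h. h /\<^sub>R cw e x - ((cv e x \<bullet> h) / cw e x) *\<^sub>R cv e x)"
  proof -
    have "bounded_linear (\<lambda>h. (cv e x \<bullet> h) / cw e x)"
      by (rule bounded_linear_compose[OF bounded_linear_divide bounded_linear_inner_right])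
    hence "bounded_linear (\<lambda>h. ((cv e x \<bullet> h) / cw e x) *\<^sub>R cv e x)"
      by (rule bounded_linear_compose[OF bounded_linear_scaleR_left])
    thus ?thesis by (intro bounded_linear_sub bounded_linear_scaleR_right bounded_linear_ident)
  qed
  thus ?thesis unfolding hf_def by (simp add: bounded_linear_Blinfun_apply)
qed

lemma cv_deriv: assumes "e > 0" shows "(cv e has_derivative blinfun_apply (hf e x)) (at x)"
proof -
  have eq: "cv e = (\<lambda>x. inverse (cw e x) *\<^sub>R x)" by (auto simp: cv_def)
  have pos: "cw e x \<noteq> 0" using cw_pos[OF assms, of x] by simp
  show ?thesis unfolding eq
    apply (rule has_derivative_eq_rhs)
     apply (rule derivative_eq_intros cw_deriv[OF assms] | use pos in simp)+
    apply (rule ext)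
    using pos by (simp add: hf_apply cv_def field_simps power2_eq_square power3_eq_cube algebra_simps)
qed

lemma hf_lip: assumes "e > 0" shows "norm (hf e x - hf e y) \<le> 6 / e * norm (x - y)"
proof (rule norm_blinfun_bound)
  show "0 \<le> 6 / e * norm (x - y)" using assms by simp
  fix h
  have se: "sqrt e > 0" using assms by simp
  have "norm ((1 / cw e x - 1 / cw e y) *\<^sub>R h - (((1 / cw e x) * (cv e x \<bullet> h)) *\<^sub>R cv e x - ((1 / cw e y) * (cv e y \<bullet> h)) *\<^sub>R cv e y))
     \<le> (2 * (1/e) + 2 * (1 / sqrt e) * (2 / sqrt e)) * norm (x - y) * norm h"
  proof (rule tele)
    show "\<bar>1 / cw e x - 1 / cw e y\<bar> \<le> 1 / e * norm (x - y)" using inv_cw_lip[OF assms] by simp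
    show "\<bar>1 / cw e y\<bar> \<le> 1 / sqrt e" using cw_pos[OF assms, of y] cw_ge[OF assms, of y] se
      by (simp add: frac_le)
    show "norm (cv e x - cv e y) \<le> 2 / sqrt e * norm (x - y)" by (rule cv_lip[OF assms])
  qed (use assms cv_norm[OF assms] in auto)
  also have "(2 * (1/e) + 2 * (1 / sqrt e) * (2 / sqrt e)) = 6 / e"
    using assms by (simp add: field_simps)
  finally show "norm (blinfun_apply (hf e x - hf e y) h) \<le> 6 / e * norm (x - y) * norm h"
    by (simp add: blinfun.diff_left hf_apply algebra_simps divide_inverse)
qed


lemma cw_pair: "e > 0 \<Longrightarrow> cw e z = norm (z, sqrt e)"
  by (simp add: cw_def norm_Pair)

lemma cw_convex:
  fixes M :: "'a::real_normed_vector \<Rightarrow>\<^sub>L 'b::real_inner"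
  assumes "e > 0"
  shows "convex_on UNIV (\<lambda>\<theta>. cw e (blinfun_apply M \<theta> + c))"
  unfolding convex_on_def
proof (intro conjI ballI allI impI, simp)
  fix x y :: 'a and s t :: real
  assume st: "0 \<le> s" "0 \<le> t" "s + t = 1"
  have "(blinfun_apply M (s *\<^sub>R x + t *\<^sub>R y) + c, sqrt e)
      = s *\<^sub>R (blinfun_apply M x + c, sqrt e) + t *\<^sub>R (blinfun_apply M y + c, sqrt e)"
  proof -
    have "c = s *\<^sub>R c + t *\<^sub>R c" "sqrt e = s * sqrt e + t * sqrt e"
      using st by (simp_all add: scaleR_add_left[symmetric] distrib_right[symmetric])
    thus ?thesis by (simp add: blinfun.add_right blinfun.scaleR_right algebra_simps)
  qed
  hence "cw e (blinfun_apply M (s *\<^sub>R x + t *\<^sub>R y) + c)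
     = norm (s *\<^sub>R (blinfun_apply M x + c, sqrt e) + t *\<^sub>R (blinfun_apply M y + c, sqrt e))"
    using cw_pair[OF assms] by simp
  also have "\<dots> \<le> norm (s *\<^sub>R (blinfun_apply M x + c, sqrt e)) + norm (t *\<^sub>R (blinfun_apply M y + c, sqrt e))"
    by (rule norm_triangle_ineq)
  also have "\<dots> = s * norm (blinfun_apply M x + c, sqrt e) + t * norm (blinfun_apply M y + c, sqrt e)"
    using st by (simp only: norm_scaleR abs_of_nonneg)
  finally show "cw e (blinfun_apply M (s *\<^sub>R x + t *\<^sub>R y) + c)
     \<le> s * cw e (blinfun_apply M x + c) + t * cw e (blinfun_apply M y + c)"
    by (simp only: cw_pair[OF assms])
qed

lemma normsq_convex: "convex_on UNIV (\<lambda>x::'a::real_normed_vector. (norm x)\<^sup>2)"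
  unfolding convex_on_def
proof (intro conjI ballI allI impI, simp)
  fix x y :: 'a and s t :: real
  assume st: "0 \<le> s" "0 \<le> t" "s + t = 1"
  have "norm (s *\<^sub>R x + t *\<^sub>R y) \<le> norm (s *\<^sub>R x) + norm (t *\<^sub>R y)"
    by (rule norm_triangle_ineq)
  also have "\<dots> = s * norm x + t * norm y" using st by simp
  finally have "norm (s *\<^sub>R x + t *\<^sub>R y) \<le> s * norm x + t * norm y" .
  hence "(norm (s *\<^sub>R x + t *\<^sub>R y))\<^sup>2 \<le> (s * norm x + t * norm y)\<^sup>2"
    by (intro power_mono) auto
  also have "\<dots> \<le> s * (norm x)\<^sup>2 + t * (norm y)\<^sup>2"
  proof -
    have "0 \<le> s * t * (norm x - norm y)\<^sup>2" using st by simp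
    moreover have "s * (norm x)\<^sup>2 + t * (norm y)\<^sup>2 - (s * norm x + t * norm y)\<^sup>2 = s * t * (norm x - norm y)\<^sup>2"
    proof -
      have t: "t = 1 - s" using st(3) by simp
      show ?thesis unfolding t power2_eq_square by algebra
    qed
    ultimately show ?thesis by linarith
  qed
  finally show "(norm (s *\<^sub>R x + t *\<^sub>R y))\<^sup>2 \<le> s * (norm x)\<^sup>2 + t * (norm y)\<^sup>2" .
qed

theorem corollary9:
  fixes \<X> :: "real set" and Xa Xb :: "real^'n^3" and ta tb :: "real^3" and er :: real
  assumes "\<X> \<noteq> {}" and "compact \<X>" and "convex \<X>" and "\<X> \<subseteq> {0..}"
    and "er > 0"
  shows "(\<forall>u\<in>\<X>. twice_diff_loclip_hessian (\<lambda>\<theta>. cable_b Xa ta Xb tb er \<theta> u))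
     \<and> (\<exists>L. \<forall>u\<in>\<X>. curvature_bounded L (\<lambda>\<theta>. cable_b Xa ta Xb tb er \<theta> u))
     \<and> (\<exists>C. \<forall>\<theta>. \<forall>u\<in>\<X>. \<exists>du :: real^'n \<Rightarrow> real. \<exists>gm :: real^'n.
          (\<forall>\<theta>'. ((\<lambda>v. cable_b Xa ta Xb tb er \<theta>' v) has_real_derivative du \<theta>') (at u)) \<and>
          (du has_derivative (\<lambda>h. gm \<bullet> h)) (at \<theta>) \<and> norm gm \<le> C)"
proof -
  define D where "D = Xa - Xb"
  define c where "c = ta - tb"
  define M :: "(real^'n) \<Rightarrow>\<^sub>L (real^3)" where "M = Blinfun (\<lambda>h. D *v h)"
  define Mt :: "(real^3) \<Rightarrow>\<^sub>L (real^'n)" where "Mt = Blinfun (\<lambda>h. transpose D *v h)"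
  have Mapp: "blinfun_apply M h = D *v h" for h
    unfolding M_def by (simp add: bounded_linear_Blinfun_apply)
  have Mtapp: "blinfun_apply Mt h = transpose D *v h" for h
    unfolding Mt_def by (simp add: bounded_linear_Blinfun_apply)
  define r where "r = (\<lambda>\<theta>. blinfun_apply M \<theta> + c)"
  have e: "er > 0" by fact
  have cb: "cable_b Xa ta Xb tb er \<theta> u = u * cw er (r \<theta>)" for \<theta> u
    unfolding cable_b_def cw_def r_def Mapp D_def c_def
    by (simp add: matrix_vector_mult_diff_rdistrib algebra_simps)
  have cbf: "(\<lambda>\<theta>. cable_b Xa ta Xb tb er \<theta> u) = (\<lambda>\<theta>. u * cw er (r \<theta>))" for u
    using cb by auto
  define gg where "gg u \<theta> = u *\<^sub>R blinfun_apply Mt (cv er (r \<theta>))" for u \<theta>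
  have rder: "(r has_derivative blinfun_apply M) (at \<theta>)" for \<theta>
    unfolding r_def by (auto intro!: derivative_eq_intros)
  have phider: "((\<lambda>\<theta>. u * cw er (r \<theta>)) has_derivative (\<lambda>h. gg u \<theta> \<bullet> h)) (at \<theta>)" for u \<theta>
  proof -
    have "((\<lambda>\<theta>. cw er (r \<theta>)) has_derivative (\<lambda>h. cv er (r \<theta>) \<bullet> blinfun_apply M h)) (at \<theta>)"
      by (rule has_derivative_compose[OF rder cw_deriv[OF e]])
    hence "((\<lambda>\<theta>. u * cw er (r \<theta>)) has_derivative (\<lambda>h. u * (cv er (r \<theta>) \<bullet> blinfun_apply M h))) (at \<theta>)"
      by (rule has_derivative_mult_right)
    moreover have "(\<lambda>h. u * (cv er (r \<theta>) \<bullet> blinfun_apply M h)) = (\<lambda>h. gg u \<theta> \<bullet> h)"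
      by (rule ext) (simp add: gg_def Mapp Mtapp dot_lmul_matrix)
    ultimately show ?thesis by simp
  qed
  define H where "H u \<theta> = u *\<^sub>R (Mt o\<^sub>L hf er (r \<theta>) o\<^sub>L M)" for u \<theta>
  have ggder: "(gg u has_derivative blinfun_apply (H u \<theta>)) (at \<theta>)" for u \<theta>
  proof -
    have "((\<lambda>\<theta>. cv er (r \<theta>)) has_derivative (\<lambda>h. blinfun_apply (hf er (r \<theta>)) (blinfun_apply M h))) (at \<theta>)"
      by (rule has_derivative_compose[OF rder cv_deriv[OF e]])
    hence "((\<lambda>\<theta>. blinfun_apply Mt (cv er (r \<theta>))) has_derivative (\<lambda>h. blinfun_apply Mt (blinfun_apply (hf er (r \<theta>)) (blinfun_apply M h)))) (at \<theta>)"
      by (rule has_derivative_compose[OF _ bounded_linear.has_derivative[OF blinfun.bounded_linear_right has_derivative_ident]])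
    hence "(gg u has_derivative (\<lambda>h. u *\<^sub>R blinfun_apply Mt (blinfun_apply (hf er (r \<theta>)) (blinfun_apply M h)))) (at \<theta>)"
      unfolding gg_def by (rule has_derivative_scaleR_right)
    moreover have "(\<lambda>h. u *\<^sub>R blinfun_apply Mt (blinfun_apply (hf er (r \<theta>)) (blinfun_apply M h))) = blinfun_apply (H u \<theta>)"
      by (rule ext) (simp add: H_def blinfun.scaleR_left)
    ultimately show ?thesis by simp
  qed
  have Hlip: "norm (H u x - H u y) \<le> (\<bar>u\<bar> * norm Mt * (6 / er) * norm M * norm M) * norm (x - y)" for u x y
  proof (rule norm_blinfun_bound)
    show "0 \<le> \<bar>u\<bar> * norm Mt * (6 / er) * norm M * norm M * norm (x - y)" using e by simp
    fix h
    have "norm (blinfun_apply (H u x - H u y) h)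
        = \<bar>u\<bar> * norm (blinfun_apply Mt (blinfun_apply (hf er (r x) - hf er (r y)) (blinfun_apply M h)))"
      by (simp add: H_def blinfun.diff_left blinfun.diff_right blinfun.scaleR_left flip: scaleR_diff_right)
    also have "\<dots> \<le> \<bar>u\<bar> * (norm Mt * (norm (hf er (r x) - hf er (r y)) * (norm M * norm h)))"
      by (intro mult_left_mono order.trans[OF norm_blinfun] mult_left_mono norm_blinfun) auto
    also have "norm (hf er (r x) - hf er (r y)) \<le> 6 / er * (norm M * norm (x - y))"
    proof -
      have "r x - r y = blinfun_apply M (x - y)" by (simp add: r_def blinfun.diff_right)
      hence "norm (r x - r y) \<le> norm M * norm (x - y)" using norm_blinfun by metis
      thus ?thesis using hf_lip[OF e, of "r x" "r y"] e
        by (meson order.trans mult_left_mono divide_nonneg_nonneg less_imp_le zero_le_numeral)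
    qed
    hence "\<bar>u\<bar> * (norm Mt * (norm (hf er (r x) - hf er (r y)) * (norm M * norm h)))
         \<le> \<bar>u\<bar> * (norm Mt * ((6 / er * (norm M * norm (x - y))) * (norm M * norm h)))"
      by (intro mult_left_mono mult_right_mono) auto
    finally show "norm (blinfun_apply (H u x - H u y) h) \<le> \<bar>u\<bar> * norm Mt * (6 / er) * norm M * norm M * norm (x - y) * norm h"
      by (simp add: mult_ac)
  qed
  have P1: "\<forall>u\<in>\<X>. twice_diff_loclip_hessian (\<lambda>\<theta>. cable_b Xa ta Xb tb er \<theta> u)"
  proof
    fix u assume "u \<in> \<X>"
    have l: "\<exists>e>0. \<exists>K. lipschitz_on K (ball x e) (H u)" for x
        apply (rule exI[of _ 1], simp)
        apply (rule exI[of _ "\<bar>u\<bar> * norm Mt * (6 / er) * norm M * norm M"])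
        apply (rule lipschitz_onI)
        using Hlip e by (auto simp: dist_norm)
    show "twice_diff_loclip_hessian (\<lambda>\<theta>. cable_b Xa ta Xb tb er \<theta> u)"
      unfolding twice_diff_loclip_hessian_def cbf using phider ggder l by blast
  qed
  obtain B where B: "\<forall>u\<in>\<X>. norm u \<le> B"
    using compact_imp_bounded[OF assms(2)] bounded_iff by blast
  define B' where "B' = max B 0"
  have B': "\<bar>u\<bar> \<le> B'" if "u \<in> \<X>" for u using B that by (auto simp: B'_def)
  define L where "L = B' * norm Mt * (2 / sqrt er) * norm M"
  have L0: "0 \<le> L" unfolding L_def B'_def using e by simp
  have P2: "\<forall>u\<in>\<X>. curvature_bounded L (\<lambda>\<theta>. cable_b Xa ta Xb tb er \<theta> u)"
  proof
    fix u assume u: "u \<in> \<X>"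
    have u0: "0 \<le> u" using u assms(4) by auto
    show "curvature_bounded L (\<lambda>\<theta>. cable_b Xa ta Xb tb er \<theta> u)"
      unfolding curvature_bounded_def cbf
    proof (intro conjI exI allI)
      show "convex_on UNIV (\<lambda>x. u * cw er (r x) + L / 2 * (norm x)\<^sup>2)"
        unfolding r_def
        by (intro convex_on_add convex_on_cmul u0 cw_convex e normsq_convex) (use L0 in simp)
      fix x
      show "((\<lambda>\<theta>. u * cw er (r \<theta>)) has_derivative (\<lambda>h. gg u x \<bullet> h)) (at x)" by (rule phider)
    next
      show "lipschitz_on L UNIV (gg u)"
      proof (rule lipschitz_onI[OF _ L0])
        fix x y :: "real^'n"
        have "dist (gg u x) (gg u y) = \<bar>u\<bar> * norm (blinfun_apply Mt (cv er (r x) - cv er (r y)))"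
          by (simp add: gg_def dist_norm blinfun.diff_right flip: scaleR_diff_right)
        also have "\<dots> \<le> \<bar>u\<bar> * (norm Mt * norm (cv er (r x) - cv er (r y)))"
          by (intro mult_left_mono norm_blinfun) auto
        also have "norm (cv er (r x) - cv er (r y)) \<le> 2 / sqrt er * (norm M * norm (x - y))"
        proof -
          have "r x - r y = blinfun_apply M (x - y)" by (simp add: r_def blinfun.diff_right)
          hence "norm (r x - r y) \<le> norm M * norm (x - y)" using norm_blinfun by metis
          thus ?thesis using cv_lip[OF e, of "r x" "r y"] e
            by (meson order.trans mult_left_mono divide_nonneg_nonneg real_sqrt_ge_zero less_imp_le zero_le_numeral)
        qed
        hence "\<bar>u\<bar> * (norm Mt * norm (cv er (r x) - cv er (r y)))
            \<le> B' * (norm Mt * (2 / sqrt er * (norm M * norm (x - y))))"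
          using B'[OF u] by (intro mult_mono mult_left_mono) auto
        finally show "dist (gg u x) (gg u y) \<le> L * dist x y"
          by (simp add: L_def dist_norm mult_ac)
      qed
    qed
  qed
  have P3: "\<exists>C. \<forall>\<theta>. \<forall>u\<in>\<X>. \<exists>du :: real^'n \<Rightarrow> real. \<exists>gm :: real^'n.
          (\<forall>\<theta>'. ((\<lambda>v. cable_b Xa ta Xb tb er \<theta>' v) has_real_derivative du \<theta>') (at u)) \<and>
          (du has_derivative (\<lambda>h. gm \<bullet> h)) (at \<theta>) \<and> norm gm \<le> C"
  proof (rule exI[of _ "norm Mt"], intro allI ballI)
    fix \<theta> :: "real^'n" and u assume "u \<in> \<X>"
    show "\<exists>du :: real^'n \<Rightarrow> real. \<exists>gm :: real^'n.
          (\<forall>\<theta>'. ((\<lambda>v. cable_b Xa ta Xb tb er \<theta>' v) has_real_derivative du \<theta>') (at u)) \<and>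
          (du has_derivative (\<lambda>h. gm \<bullet> h)) (at \<theta>) \<and> norm gm \<le> norm Mt"
    proof (intro exI conjI allI)
      fix \<theta>'
      show "((\<lambda>v. cable_b Xa ta Xb tb er \<theta>' v) has_real_derivative cw er (r \<theta>')) (at u)"
        unfolding cb by (auto intro!: derivative_eq_intros)
    next
      show "((\<lambda>\<theta>. cw er (r \<theta>)) has_derivative (\<lambda>h. gg 1 \<theta> \<bullet> h)) (at \<theta>)"
        using phider[of 1 \<theta>] by simp
      have "norm (gg 1 \<theta>) \<le> norm Mt * norm (cv er (r \<theta>))" unfolding gg_def by (simp add: norm_blinfun)
      also have "\<dots> \<le> norm Mt * 1" by (intro mult_left_mono cv_norm e) auto
      finally show "norm (gg 1 \<theta>) \<le> norm Mt" by simp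
    qed
  qed
  show ?thesis using P1 P2 P3 by blast
qed

end
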